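(* Let $P(x)=a_nx^n+\cdots+a_1x$ be a nonconstant polynomial with nonnegative integer coefficients, $a_n\ne0$, and content $\gcd(a_n,\dots,a_1)=1$. Let $(a,b)\in\mathbb{N}^2$, and for $1\le t<a$ set $d_t=\dfrac{P(a)}{\gcd(P(a),P(t))}$ and $\mathscr{L}_P(a)=\operatorname{lcm}\{d_t:1\le t<a\}$. If $\gcd(b,\mathscr{L}_P(a))=1$, then \[ \frac{b\,P(t)}{P(a)}\notin\mathbb{Z}\quad\text{for all integers } 1\le t<a, \] and hence $(a,b)$ is $\mathcal{F}(a_n,\dots,a_1)$-visible.
   Context: $\mathbb{N}$ denotes the positive integers; $\operatorname{lcm}$ of the empty set is $1$. The family $\mathcal{F}(a_n,\dots,a_1)=\{y=q(a_nx^n+\cdots+a_1x): q\in\mathbb{Q}^+\}$. A point $(r,s)\in\mathbb{N}^2$ is $\mathcal{F}(a_n,\dots,a_1)$-visible if there is $q\in\mathbb{Q}^+$ with $s=q(a_nr^n+\cdots+a_1r)$ and no other point of $\mathbb{N}^2$ lies on the curve $y=q(a_nx^n+\cdots+a_1x)$ between the origin and $(r,s)$. *)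

theory Defs
  imports "HOL-Computational_Algebra.Polynomial_Factorial"
begin

definition on_curve :: "int poly \<Rightarrow> rat \<Rightarrow> nat \<Rightarrow> nat \<Rightarrow> bool" where
  "on_curve P q r s \<longleftrightarrow> of_nat s = q * of_int (poly P (int r))"

text \<open>(r,s) in N^2 (positive integers) is F-visible: some positive rational q puts
  (r,s) on the curve y = q P(x), and no other point of N^2 lies on that curve
  strictly between the origin and (r,s), i.e. with abscissa in (0,r).\<close>

definition F_visible :: "int poly \<Rightarrow> nat \<Rightarrow> nat \<Rightarrow> bool" where
  "F_visible P r s \<longleftrightarrow> 0 < r \<and> 0 < s \<and>
     (\<exists>q::rat. 0 < q \<and> on_curve P q r s \<and>
        (\<forall>r' s'. 0 < r' \<and> 0 < s' \<and> r' < r \<longrightarrow> \<not> on_curve P q r' s'))"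

text \<open>d_t = P(a) / gcd(P(a), P(t)) and L_P(a) = lcm { d_t : 1 <= t < a } (lcm of empty set = 1).\<close>

definition d_val :: "int poly \<Rightarrow> nat \<Rightarrow> nat \<Rightarrow> int" where
  "d_val P a t = poly P (int a) div gcd (poly P (int a)) (poly P (int t))"

definition L_P :: "int poly \<Rightarrow> nat \<Rightarrow> int" where
  "L_P P a = Lcm (d_val P a ` {1..<a})"

end

theory Submission
  imports Defs
begin

lemma poly_mono_aux:
  fixes P :: "int poly" and t a :: nat
  assumes nonneg: "\<forall>i. coeff P i \<ge> 0" and nonconst: "degree P \<ge> 1" and ta: "t < a"
  shows "poly P (int t) < poly P (int a)"
proof -
  have lc: "coeff P (degree P) > 0"
  proof -
    have "P \<noteq> 0" using nonconst by auto
    hence "coeff P (degree P) \<noteq> 0" by simp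
    thus ?thesis using nonneg by (metis order_le_less)
  qed
  have "(\<Sum>i\<le>degree P. coeff P i * int t ^ i) < (\<Sum>i\<le>degree P. coeff P i * int a ^ i)"
  proof (rule sum_strict_mono_ex1)
    show "\<forall>x\<in>{..degree P}. coeff P x * int t ^ x \<le> coeff P x * int a ^ x"
      using nonneg ta by (intro ballI mult_left_mono power_mono) auto
    have "int t ^ degree P < int a ^ degree P"
      using ta nonconst by (intro power_strict_mono) auto
    hence "coeff P (degree P) * int t ^ degree P < coeff P (degree P) * int a ^ degree P"
      using lc by simp
    thus "\<exists>x\<in>{..degree P}. coeff P x * int t ^ x < coeff P x * int a ^ x" by blast
  qed simp
  thus ?thesis by (simp add: poly_altdef)
qed

lemma rat_int_dvd:
  fixes x y :: int
  assumes "y \<noteq> 0" "(of_int x / of_int y :: rat) \<in> \<int>"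
  shows "y dvd x"
proof -
  obtain k where "(of_int x / of_int y :: rat) = of_int k" using assms(2) Ints_cases by blast
  hence "(of_int x :: rat) = of_int (k * y)" using assms(1) by (simp add: field_simps)
  hence "x = k * y" using of_int_eq_iff by blast
  thus ?thesis by simp
qed

theorem theorem3p6:
  fixes P :: "int poly" and a b :: nat
  assumes nonneg: "\<forall>i. coeff P i \<ge> 0"
    and no_const: "coeff P 0 = 0"
    and nonconst: "degree P \<ge> 1"
    and content1: "content P = 1"
    and apos: "0 < a" and bpos: "0 < b"
    and cop: "gcd (int b) (L_P P a) = 1"
  shows "(\<forall>t::nat. 1 \<le> t \<and> t < a \<longrightarrow>
            (of_int (int b * poly P (int t)) / of_int (poly P (int a)) :: rat) \<notin> \<int>)
         \<and> F_visible P a b"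
proof -
  have P0: "poly P 0 = 0" using no_const by (simp add: poly_0_coeff_0)
  have pos: "poly P (int t) > 0" if "1 \<le> t" for t
    using poly_mono_aux[OF nonneg nonconst, of 0 t] that P0 by simp
  have part1: "(of_int (int b * poly P (int t)) / of_int (poly P (int a)) :: rat) \<notin> \<int>"
    if t: "1 \<le> t" "t < a" for t
  proof
    assume H: "(of_int (int b * poly P (int t)) / of_int (poly P (int a)) :: rat) \<in> \<int>"
    define A where "A = poly P (int a)"
    define T where "T = poly P (int t)"
    have Apos: "A > 0" using pos[of a] t by (simp add: A_def)
    have Tpos: "T > 0" using pos[of t] t by (simp add: T_def)
    have TA: "T < A" using poly_mono_aux[OF nonneg nonconst t(2)] by (simp add: A_def T_def)
    have dv: "A dvd int b * T" using rat_int_dvd[of A "int b * T"] H Apos by (simp add: A_def T_def)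
    define g where "g = gcd A T"
    define d where "d = A div g"
    define e where "e = T div g"
    have gnz: "g \<noteq> 0" using Apos by (simp add: g_def)
    have Ag: "A = g * d" by (simp add: d_def g_def)
    have Tg: "T = g * e" by (simp add: e_def g_def)
    have cde: "coprime d e" unfolding d_def e_def g_def using Apos by (intro div_gcd_coprime) auto
    have "g * d dvd g * (int b * e)" using dv Ag Tg by (simp add: ac_simps)
    hence "d dvd int b * e" using gnz by simp
    hence db: "d dvd int b" using cde by (simp add: coprime_dvd_mult_left_iff coprime_commute)
    have "d = d_val P a t" by (simp add: d_val_def d_def g_def A_def T_def)
    moreover have "t \<in> {1..<a}" using t by simp
    ultimately have "d dvd L_P P a" unfolding L_P_def by (intro dvd_Lcm) auto
    with db have "d dvd gcd (int b) (L_P P a)" by simp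
    hence "d dvd 1" using cop by simp
    hence "A dvd g" using Ag by simp
    moreover have "g dvd T" by (simp add: g_def)
    ultimately have "A dvd T" by (rule dvd_trans)
    hence "A \<le> T" using Tpos by (simp add: zdvd_imp_le)
    thus False using TA by simp
  qed
  have F: "F_visible P a b"
    unfolding F_visible_def
  proof (intro conjI exI[of _ "of_int (int b) / of_int (poly P (int a))"])
    have Apos: "poly P (int a) > 0" using pos[of a] apos by simp
    show "0 < a" "0 < b" by (fact apos bpos)+
    show "0 < (of_int (int b) / of_int (poly P (int a)) :: rat)" using Apos bpos by simp
    show "on_curve P (of_int (int b) / of_int (poly P (int a))) a b"
      unfolding on_curve_def using Apos by simp
    show "\<forall>r' s'. 0 < r' \<and> 0 < s' \<and> r' < a \<longrightarrow>
       \<not> on_curve P (of_int (int b) / of_int (poly P (int a))) r' s'"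
    proof (intro allI impI notI)
      fix r' s' assume h: "0 < r' \<and> 0 < s' \<and> r' < a"
        and oc: "on_curve P (of_int (int b) / of_int (poly P (int a))) r' s'"
      have "(of_nat s' :: rat) = of_int (int b * poly P (int r')) / of_int (poly P (int a))"
        using oc unfolding on_curve_def by simp
      hence "(of_int (int b * poly P (int r')) / of_int (poly P (int a)) :: rat) \<in> \<int>"
        by (metis Ints_of_nat)
      thus False using part1[of r'] h by simp
    qed
  qed
  show ?thesis using part1 F by blast
qed

end
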